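(* Let $M,N,K$ be symmetric homogeneous bi-variate means having symmetric asymptotic expansions with coefficients $(a^M_n)$, $(a^N_n)$, $(a^K_n)$ respectively. Then the resultant mean-map $R=\mathcal R(K,N,M)$, $R(s,t)=K\big(N(s,M(s,t)),N(M(s,t),t)\big)$, has a symmetric asymptotic expansion $R(x-t,x+t)\sim\sum_{m\ge0}a^R_mt^{2m}x^{-2m+1}$ ($x\to\infty$) with $$a^R_m=\sum_{n=0}^m a^K_n\sum_{k=0}^{m-n}P[k,2n,\mathbf d]\,P[m-n-k,-2n+1,\mathbf s],\qquad m\in\mathbb N_0,$$ where $\mathbf d=(d_m)_{m\ge0}$ and $\mathbf s=(s_m)_{m\ge0}$ are $$d_m=-\frac12\sum_{n=0}^m a^N_n\sum_{k=0}^{2m+1-2n}P[k,2n,\mathbf g^M]\,P[2m+1-2n-k,-2n+1,\mathbf h^M],$$ $$s_m=\frac12\sum_{n=0}^m a^N_n\sum_{k=0}^{2m-2n}P[k,2n,\mathbf g^M]\,P[2m-2n-k,-2n+1,\mathbf h^M].$$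
   Context: A bi-variate mean is a function $M:(0,\infty)^2\to(0,\infty)$ with $\min(s,t)\le M(s,t)\le\max(s,t)$; it is symmetric if $M(s,t)=M(t,s)$ and homogeneous if $M(\lambda s,\lambda t)=\lambda M(s,t)$ for $\lambda,s,t>0$. A mean $M$ has a symmetric asymptotic expansion with coefficients $(a^M_n)_{n\ge0}$ if for every fixed real $t$ and every $N\ge0$, $M(x-t,x+t)=\sum_{n=0}^N a^M_nt^{2n}x^{-2n+1}+o(x^{-2N+1})$ as $x\to\infty$. For a sequence $\mathbf b=(b_0,b_1,\ldots)$ with $b_0\ne0$ and $r\in\mathbb R$, $P[0,r,\mathbf b]=b_0^r$ and $P[n,r,\mathbf b]=\frac1{nb_0}\sum_{k=1}^n(k(1+r)-n)b_kP[n-k,r,\mathbf b]$ for $n\ge1$ (the coefficient of $z^n$ in $(\sum_j b_jz^j)^r$). Given coefficients $(a^M_n)$, set $\mathbf g^M=(1,a^M_1,0,a^M_2,0,a^M_3,\ldots)$ (i.e. $g_0=1$, $g_{2k-1}=a^M_k$, $g_{2k}=0$ for $k\ge1$) and $\mathbf h^M=(2,-1,a^M_1,0,a^M_2,0,a^M_3,\ldots)$ (i.e. $h_0=2$, $h_1=-1$, $h_{2k}=a^M_k$, $h_{2k+1}=0$ for $k\ge1$). (One has $d_0=1/2$, $s_0=1$.) *)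

theory Defs
  imports "HOL-Analysis.Analysis" "HOL-Library.Landau_Symbols"
begin

definition is_mean :: "(real \<Rightarrow> real \<Rightarrow> real) \<Rightarrow> bool" where
  "is_mean M \<longleftrightarrow> (\<forall>s>0. \<forall>t>0. min s t \<le> M s t \<and> M s t \<le> max s t)"

definition symmetric_mean :: "(real \<Rightarrow> real \<Rightarrow> real) \<Rightarrow> bool" where
  "symmetric_mean M \<longleftrightarrow> (\<forall>s>0. \<forall>t>0. M s t = M t s)"

definition homogeneous_mean :: "(real \<Rightarrow> real \<Rightarrow> real) \<Rightarrow> bool" where
  "homogeneous_mean M \<longleftrightarrow> (\<forall>l>0. \<forall>s>0. \<forall>t>0. M (l * s) (l * t) = l * M s t)"

definition has_sym_asymp_exp :: "(real \<Rightarrow> real \<Rightarrow> real) \<Rightarrow> (nat \<Rightarrow> real) \<Rightarrow> bool" where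
  "has_sym_asymp_exp M a \<longleftrightarrow>
     (\<forall>t::real. \<forall>N::nat.
        (\<lambda>x. M (x - t) (x + t) - (\<Sum>n\<le>N. a n * t ^ (2 * n) * x powr (1 - 2 * real n)))
          \<in> o[at_top](\<lambda>x. x powr (1 - 2 * real N)))"

text \<open>P[n,r,b]: coefficient of z^n in (sum_j b_j z^j)^r, defined by the recursion.\<close>
function P :: "nat \<Rightarrow> real \<Rightarrow> (nat \<Rightarrow> real) \<Rightarrow> real" where
  "P n r b = (if n = 0 then b 0 powr r
     else (1 / (real n * b 0)) *
          (\<Sum>k\<in>{1..n}. (real k * (1 + r) - real n) * b k * P (n - k) r b))"
  by auto
termination
  by (relation "Wellfounded.measure (\<lambda>(n, r, b). n)") auto

declare P.simps [simp del]

definition gseq :: "(nat \<Rightarrow> real) \<Rightarrow> nat \<Rightarrow> real" where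
  "gseq a j = (if j = 0 then 1 else if odd j then a ((j + 1) div 2) else 0)"

definition hseq :: "(nat \<Rightarrow> real) \<Rightarrow> nat \<Rightarrow> real" where
  "hseq a j = (if j = 0 then 2 else if j = 1 then -1 else if even j then a (j div 2) else 0)"

definition dseq :: "(nat \<Rightarrow> real) \<Rightarrow> (nat \<Rightarrow> real) \<Rightarrow> nat \<Rightarrow> real" where
  "dseq aM aN m = - (1/2) * (\<Sum>n\<le>m. aN n *
      (\<Sum>k\<le>2*m+1-2*n. P k (2 * real n) (gseq aM) *
                      P (2*m+1-2*n-k) (1 - 2 * real n) (hseq aM)))"

definition sseq :: "(nat \<Rightarrow> real) \<Rightarrow> (nat \<Rightarrow> real) \<Rightarrow> nat \<Rightarrow> real" where
  "sseq aM aN m = (1/2) * (\<Sum>n\<le>m. aN n *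
      (\<Sum>k\<le>2*m-2*n. P k (2 * real n) (gseq aM) *
                      P (2*m-2*n-k) (1 - 2 * real n) (hseq aM)))"

definition resultant :: "(real \<Rightarrow> real \<Rightarrow> real) \<Rightarrow> (real \<Rightarrow> real \<Rightarrow> real)
    \<Rightarrow> (real \<Rightarrow> real \<Rightarrow> real) \<Rightarrow> real \<Rightarrow> real \<Rightarrow> real" where
  "resultant K N M s t = K (N s (M s t)) (N (M s t) t)"

definition resultant_coeff :: "(nat \<Rightarrow> real) \<Rightarrow> (nat \<Rightarrow> real) \<Rightarrow> (nat \<Rightarrow> real) \<Rightarrow> nat \<Rightarrow> real" where
  "resultant_coeff aK aN aM m = (\<Sum>n\<le>m. aK n *
      (\<Sum>k\<le>m-n. P k (2 * real n) (dseq aM aN) *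
                P (m-n-k) (1 - 2 * real n) (sseq aM aN)))"

end

theory Submission
  imports Defs "HOL-Computational_Algebra.Formal_Power_Series"
begin

unbundle no vec_syntax
unbundle fps_syntax



definition aexp :: "nat \<Rightarrow> real fps \<Rightarrow> (real \<Rightarrow> real) \<Rightarrow> bool" where
  "aexp N F f \<longleftrightarrow> ((\<lambda>u. (f u - (\<Sum>k\<le>N. F$k * u^k)) / u^N) \<longlongrightarrow> 0) (at 0)"

lemma aexp_cong:
  assumes "aexp N F f" "eventually (\<lambda>u. f u = g u) (at 0)" "\<And>k. k \<le> N \<Longrightarrow> F$k = G$k"
  shows "aexp N G g"
proof -
  have "eventually (\<lambda>u. (f u - (\<Sum>k\<le>N. F$k * u^k)) / u^N = (g u - (\<Sum>k\<le>N. G$k * u^k)) / u^N) (at 0)"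
    using assms(2) by eventually_elim (simp add: assms(3))
  then show ?thesis using assms(1) unfolding aexp_def by (rule tendsto_cong[THEN iffD1])
qed

lemma aexp_0: "aexp 0 F f \<longleftrightarrow> (f \<longlongrightarrow> F$0) (at 0)"
  unfolding aexp_def by (simp add: LIM_zero_iff)

lemma aexp_Suc: "aexp (Suc N) F f \<longleftrightarrow> aexp N (fps_shift 1 F) (\<lambda>u. (f u - F$0) / u)"
proof -
  have "eventually (\<lambda>u. (f u - (\<Sum>k\<le>Suc N. F$k * u^k)) / u^(Suc N) =
      ((f u - F$0) / u - (\<Sum>k\<le>N. fps_shift 1 F$k * u^k)) / u^N) (at 0)"
    unfolding eventually_at_filter
  proof (intro always_eventually allI impI)
    fix u :: real assume "u \<noteq> 0"
    have "(\<Sum>k\<le>Suc N. F$k * u^k) = F$0 + u * (\<Sum>k\<le>N. F$(k+1) * u^k)"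
      by (subst sum.atMost_Suc_shift) (simp add: sum_distrib_left algebra_simps)
    then show "(f u - (\<Sum>k\<le>Suc N. F$k * u^k)) / u^(Suc N) =
      ((f u - F$0) / u - (\<Sum>k\<le>N. fps_shift 1 F$k * u^k)) / u^N"
      using \<open>u \<noteq> 0\<close> by (simp add: field_simps)
  qed
  then show ?thesis unfolding aexp_def by (rule tendsto_cong)
qed

lemma aexp_tendsto: "aexp N F f \<Longrightarrow> (f \<longlongrightarrow> F$0) (at 0)"
proof (induction N arbitrary: F f)
  case 0 then show ?case by (simp add: aexp_0)
next
  case (Suc N)
  from Suc.IH[OF Suc.prems[unfolded aexp_Suc]]
  have "((\<lambda>u. (f u - F$0) / u) \<longlongrightarrow> F$1) (at 0)" by simp
  then have "((\<lambda>u. F$0 + u * ((f u - F$0) / u)) \<longlongrightarrow> F$0 + 0 * F$1) (at 0)"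
    by (intro tendsto_intros) auto
  moreover have "eventually (\<lambda>u. F$0 + u * ((f u - F$0) / u) = f u) (at 0)"
    unfolding eventually_at_filter by (intro always_eventually) auto
  ultimately show ?case by (simp add: tendsto_cong)
qed

lemma aexp_mono: "aexp (Suc N) F f \<Longrightarrow> aexp N F f"
proof (induction N arbitrary: F f)
  case 0 then show ?case by (simp add: aexp_0 aexp_tendsto)
next
  case (Suc N)
  then show ?case by (simp add: aexp_Suc)
qed

lemma aexp_le: "aexp N F f \<Longrightarrow> M \<le> N \<Longrightarrow> aexp M F f"
  by (induction N) (auto simp: le_Suc_eq dest: aexp_mono)

lemma aexp_add: "aexp N F f \<Longrightarrow> aexp N G g \<Longrightarrow> aexp N (F + G) (\<lambda>u. f u + g u)"
  unfolding aexp_def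
  by (drule (1) tendsto_add) (simp add: sum.distrib algebra_simps add_divide_distrib diff_divide_distrib)

lemma aexp_const: "aexp N (fps_const c) (\<lambda>_. c)"
proof -
  have "(\<Sum>k\<le>N. fps_const c $ k * u^k) = c" for u :: real
    by (subst sum.atMost_shift) (auto simp: fps_nth_fps_const)
  then show ?thesis unfolding aexp_def by simp
qed


lemma fps_shift1_mult: "fps_shift 1 (F * G) = F * fps_shift 1 G + fps_const (G$0) * fps_shift 1 (F :: real fps)"
proof (rule fps_ext)
  fix n
  have "(F * G) $ (n+1) = (\<Sum>i=0..n. F$i * G$(n + 1 - i)) + F$(n+1) * G$0"
    by (simp add: fps_mult_nth)
  also have "(\<Sum>i=0..n. F$i * G$(n + 1 - i)) = (\<Sum>i=0..n. F$i * G$(n - i + 1))"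
    by (intro sum.cong) (auto simp: Suc_diff_le)
  finally show "fps_shift 1 (F * G) $ n = (F * fps_shift 1 G + fps_const (G$0) * fps_shift 1 F) $ n"
    by (simp add: fps_mult_nth[of F])
qed

lemma aexp_mult: "aexp N F f \<Longrightarrow> aexp N G g \<Longrightarrow> aexp N (F * G) (\<lambda>u. f u * g u)"
proof (induction N arbitrary: F G f g)
  case 0 then show ?case by (simp add: aexp_0 tendsto_mult)
next
  case (Suc N)
  have f: "aexp N F f" using Suc.prems(1) by (rule aexp_mono)
  have f': "aexp N (fps_shift 1 F) (\<lambda>u. (f u - F$0) / u)" using Suc.prems(1) by (simp add: aexp_Suc)
  have g': "aexp N (fps_shift 1 G) (\<lambda>u. (g u - G$0) / u)" using Suc.prems(2) by (simp add: aexp_Suc)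
  have "aexp N (F * fps_shift 1 G + fps_const (G$0) * fps_shift 1 F)
      (\<lambda>u. f u * ((g u - G$0) / u) + G$0 * ((f u - F$0) / u))"
    by (intro aexp_add Suc.IH f f' g' aexp_const)
  then have "aexp N (fps_shift 1 (F * G)) (\<lambda>u. (f u * g u - (F*G)$0) / u)"
    by (rule aexp_cong) (simp_all only: fps_shift1_mult, auto simp: eventually_at_filter field_simps)
  then show ?case by (simp add: aexp_Suc)
qed

lemma aexp_cmult: "aexp N F f \<Longrightarrow> aexp N (fps_const c * F) (\<lambda>u. c * f u)"
  using aexp_mult[OF aexp_const] .

lemma aexp_uminus: "aexp N F f \<Longrightarrow> aexp N (- F) (\<lambda>u. - f u)"
  using aexp_cmult[of N F f "-1"] by (simp flip: fps_const_neg)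

lemma aexp_diff: "aexp N F f \<Longrightarrow> aexp N G g \<Longrightarrow> aexp N (F - G) (\<lambda>u. f u - g u)"
  using aexp_add[OF _ aexp_uminus, of N F f G g] by simp

lemma aexp_power: "aexp N F f \<Longrightarrow> aexp N (F ^ n) (\<lambda>u. f u ^ n)"
proof (induction n)
  case 0 then show ?case using aexp_const[of N 1] by (simp add: fps_const_1_eq_1)
next
  case (Suc n) then show ?case using aexp_mult[of N F f "F^n"] by simp
qed

lemma aexp_sum: "finite A \<Longrightarrow> (\<And>i. i \<in> A \<Longrightarrow> aexp N (F i) (f i)) \<Longrightarrow>
   aexp N (\<Sum>i\<in>A. F i) (\<lambda>u. \<Sum>i\<in>A. f i u)"
proof (induction A rule: finite_induct)
  case empty then show ?case using aexp_const[of N 0] by simp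
next
  case (insert x A) then show ?case by (simp add: aexp_add)
qed

lemma aexp_X: "aexp N fps_X (\<lambda>u. u)"
proof (cases N)
  case 0 then show ?thesis by (simp add: aexp_0)
next
  case (Suc M)
  have "aexp M 1 (\<lambda>u. (u - fps_X $ 0) / u)"
    using aexp_const[of M 1] by (rule aexp_cong) (auto simp: eventually_at_filter fps_const_1_eq_1)
  moreover have "fps_shift 1 fps_X = (1 :: real fps)"
    by (rule fps_ext) simp
  ultimately show ?thesis using Suc by (simp add: aexp_Suc)
qed

lemma fps_shift1_inverse:
  assumes "F$0 \<noteq> (0::real)"
  shows "fps_shift 1 (inverse F) = - fps_shift 1 F * inverse F * fps_const (inverse (F$0))"
proof -
  have s1: "fps_shift 1 (1::real fps) = 0" by (rule fps_ext) simp
  have "fps_shift 1 (F * inverse F) = 0"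
    using assms by (simp only: inverse_mult_eq_1'[OF assms] s1)
  then have "F * fps_shift 1 (inverse F) + fps_const (inverse (F$0)) * fps_shift 1 F = 0"
    by (simp only: fps_shift1_mult fps_inverse_nth_0)
  then have e: "F * fps_shift 1 (inverse F) = - (fps_const (inverse (F$0)) * fps_shift 1 F)"
    by (simp only: eq_neg_iff_add_eq_0)
  have "fps_shift 1 (inverse F) = (inverse F * F) * fps_shift 1 (inverse F)"
    using assms by (simp add: inverse_mult_eq_1)
  also have "\<dots> = inverse F * (F * fps_shift 1 (inverse F))" by (simp add: mult.assoc)
  also have "\<dots> = - fps_shift 1 F * inverse F * fps_const (inverse (F$0))"
    unfolding e by (simp add: algebra_simps)
  finally show ?thesis .
qed

lemma aexp_inverse: "aexp N F f \<Longrightarrow> F$0 \<noteq> 0 \<Longrightarrow> aexp N (inverse F) (\<lambda>u. inverse (f u))"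
proof (induction N arbitrary: F f)
  case 0 then show ?case by (simp add: aexp_0 tendsto_inverse)
next
  case (Suc N)
  have f: "aexp N F f" using Suc.prems(1) by (rule aexp_mono)
  have f': "aexp N (fps_shift 1 F) (\<lambda>u. (f u - F$0) / u)" using Suc.prems(1) by (simp add: aexp_Suc)
  have ev: "eventually (\<lambda>u. f u \<noteq> 0) (at 0)"
    using aexp_tendsto[OF Suc.prems(1)] Suc.prems(2) by (rule tendsto_imp_eventually_ne)
  have "aexp N (- fps_shift 1 F * inverse F * fps_const (inverse (F$0)))
      (\<lambda>u. - ((f u - F$0) / u) * inverse (f u) * inverse (F$0))"
    by (intro aexp_mult aexp_uminus f' Suc.IH f Suc.prems(2) aexp_const)
  then have "aexp N (fps_shift 1 (inverse F)) (\<lambda>u. (inverse (f u) - inverse F $ 0) / u)"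
  proof (rule aexp_cong)
    show "eventually (\<lambda>u. - ((f u - F$0) / u) * inverse (f u) * inverse (F$0) =
       (inverse (f u) - inverse F $ 0) / u) (at 0)"
      using ev unfolding eventually_at_filter
      by eventually_elim (use Suc.prems(2) in \<open>auto simp: field_simps\<close>)
  qed (simp only: fps_shift1_inverse[OF Suc.prems(2)])
  then show ?case by (simp add: aexp_Suc)
qed


lemma aexp_compose:
  assumes F: "aexp N F \<phi>" and F0: "\<phi> 0 = F$0" and G: "aexp N G g" and G0: "G$0 = 0"
  shows "aexp N (\<Sum>k\<le>N. fps_const (F$k) * G^k) (\<lambda>u. \<phi> (g u))"
proof -
  define S where "S v = (\<Sum>k\<le>N. F$k * v^k)" for v :: real
  define \<epsilon> where "\<epsilon> v = (if v = 0 then 0 else (\<phi> v - S v) / v^N)" for v :: real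
  have "(\<epsilon> \<longlongrightarrow> 0) (at 0)"
    using F unfolding aexp_def
    by (rule tendsto_cong[THEN iffD1, rotated]) (auto simp: eventually_at_filter \<epsilon>_def S_def)
  then have cont: "isCont \<epsilon> 0" by (simp add: isCont_def \<epsilon>_def)
  have gt: "(g \<longlongrightarrow> 0) (at 0)" using aexp_tendsto[OF G] G0 by simp
  have eg: "((\<lambda>u. \<epsilon> (g u)) \<longlongrightarrow> 0) (at 0)"
    using isCont_tendsto_compose[OF cont gt] by (simp add: \<epsilon>_def)
  have S0: "S 0 = F$0" unfolding S_def by (subst sum.atMost_shift) auto
  have id: "\<phi> v = S v + v^N * \<epsilon> v" for v
    by (cases "v = 0") (auto simp: \<epsilon>_def S0 F0)
  have main: "aexp N (\<Sum>k\<le>N. fps_const (F$k) * G^k) (\<lambda>u. \<Sum>k\<le>N. F$k * g u ^ k)"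
    by (intro aexp_sum aexp_cmult aexp_power G) auto
  have rem: "aexp N 0 (\<lambda>u. g u ^ N * \<epsilon> (g u))"
  proof (cases N)
    case 0 then show ?thesis using eg by (simp add: aexp_0)
  next
    case (Suc M)
    have "aexp 1 G g" using G Suc by (intro aexp_le[OF G]) auto
    then have q: "((\<lambda>u. g u / u) \<longlongrightarrow> G$1) (at 0)" by (simp add: aexp_Suc aexp_0 G0)
    have "((\<lambda>u. (g u / u)^N * \<epsilon> (g u)) \<longlongrightarrow> (G$1)^N * 0) (at 0)"
      by (intro tendsto_intros q eg)
    then have "((\<lambda>u. (g u / u)^N * \<epsilon> (g u)) \<longlongrightarrow> 0) (at 0)" by simp
    then show ?thesis unfolding aexp_def
      by (rule tendsto_cong[THEN iffD1, rotated]) (auto simp: eventually_at_filter power_divide)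
  qed
  have "aexp N ((\<Sum>k\<le>N. fps_const (F$k) * G^k) + 0) (\<lambda>u. (\<Sum>k\<le>N. F$k * g u ^ k) + g u ^ N * \<epsilon> (g u))"
    by (rule aexp_add[OF main rem])
  then show ?thesis
    by (rule aexp_cong) (auto simp: id S_def)
qed

lemma aexp_reflect:
  assumes "aexp N F f"
  shows "aexp N (Abs_fps (\<lambda>k. (-1)^k * F$k)) (\<lambda>u. f (- u))"
proof -
  let ?E = "\<lambda>u. (f u - (\<Sum>k\<le>N. F$k * u^k)) / u^N"
  have "(?E \<longlongrightarrow> 0) (at 0)" using assms by (simp add: aexp_def)
  moreover have m: "filterlim (\<lambda>u::real. - u) (at 0) (at 0)"
    using filtermap_at_minus[of "0::real"] by (simp add: filterlim_def)
  ultimately have "((\<lambda>u. ?E (- u)) \<longlongrightarrow> 0) (at 0)"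
    by (rule filterlim_compose)
  then have "((\<lambda>u. (-1)^N * ?E (- u)) \<longlongrightarrow> 0) (at 0)"
    using tendsto_mult_left[of "\<lambda>u. ?E (- u)" 0 "at 0" "(-1)^N"] by simp
  moreover have "(-1)^N * ?E (- u) = (f (- u) - (\<Sum>k\<le>N. Abs_fps (\<lambda>k. (-1)^k * F$k) $ k * u^k)) / u^N" for u
  proof -
    have e1: "(\<Sum>k\<le>N. F$k * (- u)^k) = (\<Sum>k\<le>N. Abs_fps (\<lambda>k. (-1)^k * F$k) $ k * u^k)"
      by (intro sum.cong) (auto simp: power_minus[of u])
    have e2: "(-1::real)^N * (-1)^N = 1" by (simp flip: power_mult_distrib)
    have "(-1)^N * ?E (- u) = (-1)^N * ((f (- u) - (\<Sum>k\<le>N. F$k * (- u)^k)) / ((-1)^N * u^N))"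
      by (simp add: power_minus[of u])
    also have "\<dots> = (f (- u) - (\<Sum>k\<le>N. F$k * (- u)^k)) / u^N"
      using e2 by (cases "u = 0"; cases N) (auto simp: field_simps)
    finally show ?thesis using e1 by simp
  qed
  ultimately show ?thesis unfolding aexp_def by simp
qed




lemma Xd_nth: "(fps_X * fps_deriv (A :: real fps)) $ n = of_nat n * A $ n"
  by (cases n) auto

lemma deriv_pow_B: "B * fps_deriv (B ^ a) = fps_const (of_nat a) * fps_deriv B * (B :: real fps) ^ a"
proof (cases a)
  case (Suc m)
  have d: "fps_deriv (B^a) = fps_const (of_nat a) * fps_deriv B * B^m"
    by (simp only: fps_deriv_power Suc diff_Suc_1)
  have "B * fps_deriv (B^a) = fps_const (of_nat a) * fps_deriv B * (B * B^m)"
    by (simp only: d mult_ac)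
  also have "B * B^m = B^a" by (simp add: Suc)
  finally show ?thesis .
qed simp

lemma deriv_pow_IB:
  assumes "B $ 0 \<noteq> (0::real)"
  shows "B * fps_deriv (inverse B ^ c) = - fps_const (of_nat c) * fps_deriv B * inverse B ^ c"
proof (cases c)
  case (Suc m)
  have BI: "B * inverse B = 1" using assms by (rule inverse_mult_eq_1')
  have d: "fps_deriv (inverse B^c) = fps_const (of_nat c) * fps_deriv (inverse B) * inverse B^m"
    by (simp only: fps_deriv_power Suc diff_Suc_1)
  have "B * fps_deriv (inverse B ^ c) = fps_const (of_nat c) * (B * fps_deriv (inverse B)) * inverse B ^ m"
    by (simp only: d mult_ac)
  also have "B * fps_deriv (inverse B) = - fps_deriv B * inverse B"
    using assms by (simp add: fps_inverse_deriv power2_eq_square algebra_simps BI)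
  finally show ?thesis using Suc by (simp only: power_Suc mult_ac mult_minus_left mult_minus_right)
qed simp

lemma deriv_A:
  assumes "B $ 0 \<noteq> (0::real)"
  shows "B * fps_deriv (B ^ a * inverse B ^ c) =
     fps_const (real a - real c) * fps_deriv B * (B ^ a * inverse B ^ c)"
proof -
  have "B * fps_deriv (B ^ a * inverse B ^ c) =
     (B * fps_deriv (B ^ a)) * inverse B ^ c + B ^ a * (B * fps_deriv (inverse B ^ c))"
    by (simp add: algebra_simps)
  also have "\<dots> = fps_const (real a - real c) * fps_deriv B * (B ^ a * inverse B ^ c)"
    unfolding deriv_pow_B deriv_pow_IB[OF assms]
    by (simp add: algebra_simps flip: fps_const_sub fps_const_neg)
  finally show ?thesis .
qed

lemma P_fps:
  assumes b0: "b 0 > 0"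
  shows "P n (real a - real c) b = (Abs_fps b ^ a * inverse (Abs_fps b) ^ c) $ n"
proof (induction n rule: less_induct)
  case (less n)
  define B where "B = Abs_fps b"
  define A where "A = B ^ a * inverse B ^ c"
  define r where "r = real a - real c"
  have B0: "B $ 0 \<noteq> 0" using b0 by (simp add: B_def)
  show ?case
  proof (cases "n = 0")
    case True
    then show ?thesis using b0
      by (simp add: P.simps powr_diff powr_realpow fps_nth_power_0 power_inverse divide_inverse)
  next
    case False
    have IH: "P (n - k) r b = A $ (n - k)" if "k \<in> {1..n}" for k
      using less[of "n - k"] that False by (auto simp: A_def B_def r_def)
    have D: "B * fps_deriv A = fps_const r * fps_deriv B * A"
      using deriv_A[OF B0, of a c] by (simp add: A_def r_def)
    have "B * (fps_X * fps_deriv A) = fps_const r * ((fps_X * fps_deriv B) * A)"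
    proof -
      have "B * (fps_X * fps_deriv A) = fps_X * (B * fps_deriv A)" by (simp only: mult_ac)
      also have "\<dots> = fps_X * (fps_const r * fps_deriv B * A)" by (simp only: D)
      also have "\<dots> = fps_const r * ((fps_X * fps_deriv B) * A)" by (simp only: mult_ac)
      finally show ?thesis .
    qed
    then have "(B * (fps_X * fps_deriv A)) $ n = (fps_const r * ((fps_X * fps_deriv B) * A)) $ n"
      by (rule arg_cong)
    then have E: "(\<Sum>i=0..n. b i * (of_nat (n - i) * A $ (n - i))) =
        r * (\<Sum>i=0..n. of_nat i * b i * A $ (n - i))"
      unfolding fps_mult_nth[of B] fps_mult_left_const_nth fps_mult_nth[of "fps_X * fps_deriv B"] Xd_nth
      by (simp add: B_def)
    have E0: "(\<Sum>i=0..n. b i * (of_nat (n - i) * A $ (n - i))) =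
        b 0 * (of_nat n * A $ n) + (\<Sum>i=1..n. b i * (of_nat (n - i) * A $ (n - i)))"
      by (subst sum.atLeast_Suc_atMost) auto
    have E1: "(\<Sum>i=0..n. of_nat i * b i * A $ (n - i)) = (\<Sum>i=1..n. of_nat i * b i * A $ (n - i))"
      by (subst sum.atLeast_Suc_atMost) auto
    have E2: "(\<Sum>k=1..n. (real k * (1 + r) - real n) * b k * A $ (n - k)) =
       r * (\<Sum>i=1..n. of_nat i * b i * A $ (n - i)) - (\<Sum>i=1..n. b i * (of_nat (n - i) * A $ (n - i)))"
    proof -
      have "r * (\<Sum>i=1..n. of_nat i * b i * A $ (n - i)) - (\<Sum>i=1..n. b i * (of_nat (n - i) * A $ (n - i)))
          = (\<Sum>i=1..n. r * (of_nat i * b i * A $ (n - i)) - b i * (of_nat (n - i) * A $ (n - i)))"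
        by (simp add: sum_distrib_left sum_subtractf)
      also have "\<dots> = (\<Sum>k=1..n. (real k * (1 + r) - real n) * b k * A $ (n - k))"
        by (rule sum.cong) (auto simp: of_nat_diff algebra_simps)
      finally show ?thesis by simp
    qed
    have "P n r b = (1 / (real n * b 0)) * (\<Sum>k\<in>{1..n}. (real k * (1 + r) - real n) * b k * A $ (n - k))"
    proof -
      have "(\<Sum>k\<in>{1..n}. (real k * (1 + r) - real n) * b k * P (n - k) r b) =
            (\<Sum>k\<in>{1..n}. (real k * (1 + r) - real n) * b k * A $ (n - k))"
        by (rule sum.cong[OF refl]) (simp only: IH)
      then show ?thesis using False by (subst P.simps) simp
    qed
    also have "(\<Sum>k\<in>{1..n}. (real k * (1 + r) - real n) * b k * A $ (n - k)) = b 0 * (of_nat n * A $ n)"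
      using E E0 E1 E2 by simp
    also have "(1 / (real n * b 0)) * (b 0 * (of_nat n * A $ n)) = A $ n"
      using False b0 by (simp add: field_simps)
    finally show ?thesis by (simp add: A_def B_def r_def)
  qed
qed




definition evfps :: "(nat \<Rightarrow> real) \<Rightarrow> real fps" where
  "evfps a = Abs_fps (\<lambda>j. if even j then a (j div 2) else 0)"

lemma sum_even_atMost:
  fixes f :: "nat \<Rightarrow> 'a::comm_monoid_add"
  shows "(\<Sum>k\<le>N. if even k then f (k div 2) else 0) = (\<Sum>n\<le>N div 2. f n)"
proof (induction N)
  case 0 then show ?case by simp
next
  case (Suc N)
  show ?case
  proof (cases "even (Suc N)")
    case True
    then have "Suc N div 2 = Suc (N div 2)" by presburger
    with True Suc show ?thesis by (simp add: add.commute)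
  next
    case False
    then have "Suc N div 2 = N div 2" by presburger
    with False Suc show ?thesis by simp
  qed
qed

lemma sum_restrict_atMost:
  fixes t :: "nat \<Rightarrow> 'a::comm_monoid_add"
  assumes "m \<le> K"
  shows "(\<Sum>n\<le>K. if n \<le> m then t n else 0) = (\<Sum>n\<le>m. t n)"
proof -
  have "(\<Sum>n\<le>K. if n \<le> m then t n else 0) = (\<Sum>n\<in>{..K} \<inter> {n. n \<le> m}. t n)"
    by (simp add: sum.inter_restrict)
  also have "{..K} \<inter> {n. n \<le> m} = {..m}" using assms by auto
  finally show ?thesis .
qed

lemma evF_nth: "(F oo fps_X^2) $ j = (if even j then F $ (j div 2) else (0::real))"
proof -
  have "(F oo fps_X^2) $ j = (\<Sum>i=0..j. if i = j div 2 \<and> even j then F $ i else 0)"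
    unfolding fps_compose_nth
    by (intro sum.cong refl) (auto simp flip: power_mult)
  also have "\<dots> = (if even j then F $ (j div 2) else 0)"
    by (cases "even j") auto
  finally show ?thesis .
qed

lemma evfps_eq: "evfps a = Abs_fps a oo fps_X^2"
  by (rule fps_ext) (simp add: evfps_def evF_nth)

lemma X2_0: "(fps_X^2 :: real fps) $ 0 = 0" by simp

lemma evF_mult: "(F * G) oo fps_X^2 = (F oo fps_X^2) * (G oo (fps_X^2 :: real fps))"
  by (rule fps_compose_mult_distrib[OF X2_0])

lemma evF_power: "(F ^ n) oo fps_X^2 = (F oo fps_X^2) ^ n" for F :: "real fps"
  by (rule fps_compose_power[OF X2_0, symmetric])

lemma evF_inverse: "F $ 0 \<noteq> 0 \<Longrightarrow> inverse F oo fps_X^2 = inverse (F oo (fps_X^2 :: real fps))"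
  by (rule fps_inverse_compose[OF X2_0])

lemma sum_evfps_pow:
  "(\<Sum>k\<le>N. fps_const (evfps a $ k) * V^k) = (\<Sum>n\<le>N div 2. fps_const (a n) * V^(2*n))"
proof -
  have "(\<Sum>k\<le>N. fps_const (evfps a $ k) * V^k) =
      (\<Sum>k\<le>N. if even k then fps_const (a (k div 2)) * V^(2 * (k div 2)) else 0)"
    by (intro sum.cong refl) (auto simp: evfps_def)
  then show ?thesis using sum_even_atMost[of "\<lambda>n. fps_const (a n) * V^(2*n)" N] by simp
qed

lemma X_pow_mult_coeff_sum:
  assumes "j \<le> N"
  shows "(\<Sum>n\<le>N div 2. fps_const (c n) * (fps_X^(2*n) * T n)) $ j =
         (\<Sum>n\<le>j div 2. c n * T n $ (j - 2*n))"
proof -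
  have "(\<Sum>n\<le>N div 2. fps_const (c n) * (fps_X^(2*n) * T n)) $ j =
        (\<Sum>n\<le>N div 2. if n \<le> j div 2 then c n * T n $ (j - 2*n) else 0)"
    by (simp add: fps_sum_nth fps_X_power_mult_nth) (intro sum.cong refl, auto)
  also have "\<dots> = (\<Sum>n\<le>j div 2. c n * T n $ (j - 2*n))"
    using assms by (intro sum_restrict_atMost) auto
  finally show ?thesis .
qed


lemma P_fps_nat: "b 0 > 0 \<Longrightarrow> P k (2 * real n) b = (Abs_fps b ^ (2*n)) $ k"
  using P_fps[of b k "2*n" 0] by simp

lemma P_fps_neg: "b 0 > 0 \<Longrightarrow> P k (1 - 2 * real n) b = (Abs_fps b * inverse (Abs_fps b) ^ (2*n)) $ k"
  using P_fps[of b k 1 "2*n"] by simp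

lemma PP_coeff:
  assumes "b 0 > 0" "c 0 > 0"
  shows "(Abs_fps b ^ (2*n) * (Abs_fps c * inverse (Abs_fps c) ^ (2*n))) $ l =
    (\<Sum>k\<le>l. P k (2 * real n) b * P (l - k) (1 - 2 * real n) c)"
  by (simp add: fps_mult_nth atLeast0AtMost P_fps_nat[of b, OF assms(1)] P_fps_neg[of c, OF assms(2)])

lemma stage1:
  fixes aM aN :: "nat \<Rightarrow> real"
  assumes "j \<le> N"
  shows "(fps_const (1/2) * Abs_fps (hseq aM) * (\<Sum>k\<le>N. fps_const (evfps aN $ k) *
            (fps_const (1/2) * fps_X * Abs_fps (gseq aM) * inverse (fps_const (1/2) * Abs_fps (hseq aM)))^k)) $ j
     = (if even j then sseq aM aN (j div 2) else - dseq aM aN (j div 2))"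
proof -
  define g where "g = Abs_fps (gseq aM)"
  define h where "h = Abs_fps (hseq aM)"
  have g0: "gseq aM 0 > 0" and h0: "hseq aM 0 > 0" by (simp_all add: gseq_def hseq_def)
  have hh0: "h $ 0 \<noteq> 0" using h0 by (simp add: h_def)
  have V: "fps_const (1/2) * fps_X * g * inverse (fps_const (1/2) * h) = fps_X * g * inverse h"
    by (simp add: fps_inverse_mult fps_const_inverse mult_ac flip: fps_const_mult)
  have T: "fps_const (1/2) * h * (fps_const (aN n) * (fps_X * g * inverse h) ^ (2*n)) =
      fps_const (aN n) * (fps_X ^ (2*n) * (fps_const (1/2) * (g ^ (2*n) * (h * inverse h ^ (2*n)))))" for n
    by (simp add: power_mult_distrib mult_ac)
  have "(fps_const (1/2) * h * (\<Sum>k\<le>N. fps_const (evfps aN $ k) *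
            (fps_const (1/2) * fps_X * g * inverse (fps_const (1/2) * h))^k)) $ j
      = (\<Sum>n\<le>N div 2. fps_const (aN n) * (fps_X ^ (2*n) * (fps_const (1/2) * (g ^ (2*n) * (h * inverse h ^ (2*n)))))) $ j"
    unfolding V sum_evfps_pow sum_distrib_left T ..
  also have "\<dots> = (\<Sum>n\<le>j div 2. aN n * (1/2 * (\<Sum>k\<le>j - 2*n. P k (2 * real n) (gseq aM) * P (j - 2*n - k) (1 - 2 * real n) (hseq aM))))"
    unfolding X_pow_mult_coeff_sum[OF assms] fps_mult_left_const_nth g_def h_def PP_coeff[of "gseq aM" "hseq aM", OF g0 h0] ..
  also have "\<dots> = (if even j then sseq aM aN (j div 2) else - dseq aM aN (j div 2))"
  proof (cases "even j")
    case True
    then obtain m where j: "j = 2*m" by blast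
    show ?thesis using True unfolding j sseq_def by (simp add: sum_distrib_left mult_ac)
  next
    case False
    then obtain m where j: "j = 2*m+1" using oddE by blast
    have "j div 2 = m" using j by simp
    show ?thesis using False unfolding j dseq_def by (simp add: sum_distrib_left mult_ac sum_negf)
  qed
  finally show ?thesis unfolding g_def h_def .
qed


lemma stage2:
  fixes d s aK :: "nat \<Rightarrow> real"
  assumes d0: "d 0 > 0" and s0: "s 0 > 0" and j: "j \<le> N"
  shows "((Abs_fps s oo fps_X^2) * (\<Sum>k\<le>N. fps_const (evfps aK $ k) *
            ((fps_X * (Abs_fps d oo fps_X^2)) * inverse (Abs_fps s oo fps_X^2))^k)) $ j
     = (if even j then (\<Sum>n\<le>j div 2. aK n * (\<Sum>k\<le>j div 2 - n. P k (2 * real n) d *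
            P (j div 2 - n - k) (1 - 2 * real n) s)) else 0)"
proof -
  define S where "S = Abs_fps s"
  define D where "D = Abs_fps d"
  have S0: "S $ 0 \<noteq> 0" using s0 by (simp add: S_def)
  have T: "(S oo fps_X^2) * (fps_const (aK n) * ((fps_X * (D oo fps_X^2)) * inverse (S oo fps_X^2))^(2*n)) =
      fps_const (aK n) * (fps_X ^ (2*n) * ((D ^ (2*n) * (S * inverse S ^ (2*n))) oo fps_X^2))" for n
    by (simp add: power_mult_distrib evF_mult evF_power evF_inverse[OF S0] mult_ac)
  have "((S oo fps_X^2) * (\<Sum>k\<le>N. fps_const (evfps aK $ k) *
            ((fps_X * (D oo fps_X^2)) * inverse (S oo fps_X^2))^k)) $ j
      = (\<Sum>n\<le>N div 2. fps_const (aK n) * (fps_X ^ (2*n) * ((D ^ (2*n) * (S * inverse S ^ (2*n))) oo fps_X^2))) $ j"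
    unfolding sum_evfps_pow sum_distrib_left T ..
  also have "\<dots> = (\<Sum>n\<le>j div 2. aK n * ((D ^ (2*n) * (S * inverse S ^ (2*n))) oo fps_X^2) $ (j - 2*n))"
    by (rule X_pow_mult_coeff_sum[OF j])
  also have "\<dots> = (if even j then (\<Sum>n\<le>j div 2. aK n * (\<Sum>k\<le>j div 2 - n. P k (2 * real n) d *
            P (j div 2 - n - k) (1 - 2 * real n) s)) else 0)"
  proof (cases "even j")
    case True
    then obtain m where jm: "j = 2*m" by blast
    have "(\<Sum>n\<le>j div 2. aK n * ((D ^ (2*n) * (S * inverse S ^ (2*n))) oo fps_X^2) $ (j - 2*n)) =
          (\<Sum>n\<le>m. aK n * (\<Sum>k\<le>m - n. P k (2 * real n) d * P (m - n - k) (1 - 2 * real n) s))"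
    proof (rule sum.cong)
      show "{..j div 2} = {..m}" using jm by simp
    next
      fix n assume "n \<in> {..m}"
      then have "n \<le> m" by simp
      then have "even (j - 2*n)" "(j - 2*n) div 2 = m - n" using jm by (auto simp flip: diff_mult_distrib2)
      then show "aK n * ((D ^ (2*n) * (S * inverse S ^ (2*n))) oo fps_X^2) $ (j - 2*n) =
          aK n * (\<Sum>k\<le>m - n. P k (2 * real n) d * P (m - n - k) (1 - 2 * real n) s)"
        by (simp add: evF_nth D_def S_def PP_coeff[of d s, OF d0 s0])
    qed
    then show ?thesis using True jm by simp
  next
    case False
    have "((D ^ (2*n) * (S * inverse S ^ (2*n))) oo fps_X^2) $ (j - 2*n) = 0" if "n \<le> j div 2" for n
    proof -
      have "odd (j - 2*n)" using False that by presburger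
      then show ?thesis by (simp add: evF_nth)
    qed
    then show ?thesis using False by simp
  qed
  finally show ?thesis unfolding S_def D_def .
qed




lemma mean_pos: "is_mean M \<Longrightarrow> a > 0 \<Longrightarrow> b > 0 \<Longrightarrow> M a b > 0"
  unfolding is_mean_def by (metis min_less_iff_conj order_less_le_trans)

lemma mean_diag: "is_mean M \<Longrightarrow> x > 0 \<Longrightarrow> M x x = x"
  unfolding is_mean_def by (metis min.idem max.idem order_antisym)

lemma hom_center:
  assumes "homogeneous_mean N" "a > 0" "b > 0"
  shows "N a b = (a + b) / 2 * N (1 - ((b - a) / 2) * inverse ((a + b) / 2)) (1 + ((b - a) / 2) * inverse ((a + b) / 2))"
proof -
  define l where "l = (a + b) / 2"
  define v where "v = ((b - a) / 2) * inverse ((a + b) / 2)"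
  have l: "l > 0" using assms by (simp add: l_def)
  have s: "1 - v > 0" "1 + v > 0" using assms by (auto simp: v_def field_simps)
  have "a = l * (1 - v)" "b = l * (1 + v)" using assms by (auto simp: l_def v_def field_simps)
  then have "N a b = l * N (1 - v) (1 + v)"
    using assms(1) l s unfolding homogeneous_mean_def by metis
  then show ?thesis by (simp add: l_def v_def)
qed

lemma powr_odd: "x > 0 \<Longrightarrow> x powr (1 - 2 * real n) = x / x ^ (2*n)"
  by (simp add: powr_diff powr_realpow[symmetric])

lemma powr_odd': "x > 0 \<Longrightarrow> x powr (1 - real n * 2) = x / x ^ (n*2)"
  using powr_odd[of x n] by (simp add: mult.commute)

lemma sum_evfps_even: "(\<Sum>k\<le>2*K. evfps a $ k * u^k) = (\<Sum>n\<le>K. a n * u^(2*n))"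
proof -
  have "(\<Sum>k\<le>2*K. evfps a $ k * u^k) = (\<Sum>k\<le>2*K. if even k then a (k div 2) * u^(2 * (k div 2)) else 0)"
    by (intro sum.cong refl) (auto simp: evfps_def)
  then show ?thesis using sum_even_atMost[of "\<lambda>n. a n * u^(2*n)" "2*K"] by simp
qed

lemma coeff0_is_1:
  assumes "is_mean M" "has_sym_asymp_exp M a"
  shows "a 0 = 1"
proof -
  have "(\<lambda>x. M (x - 0) (x + 0) - (\<Sum>n\<le>0. a n * 0 ^ (2 * n) * x powr (1 - 2 * real n)))
          \<in> o[at_top](\<lambda>x. x powr (1 - 2 * real 0))"
    using assms(2) unfolding has_sym_asymp_exp_def by blast
  then have "((\<lambda>x. (M x x - a 0 * x powr 1) / x powr 1) \<longlongrightarrow> 0) at_top"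
    by (intro smalloD_tendsto) simp
  moreover have "eventually (\<lambda>x. (M x x - a 0 * x powr 1) / x powr 1 = 1 - a 0) at_top"
    using eventually_gt_at_top[of 0] by eventually_elim (simp add: mean_diag[OF assms(1)] field_simps)
  ultimately have "((\<lambda>x::real. 1 - a 0) \<longlongrightarrow> 0) at_top" by (simp add: tendsto_cong)
  then show ?thesis by (simp add: tendsto_const_iff)
qed

lemma hyp_aexp:
  assumes mean: "is_mean M" and sym: "symmetric_mean M" and hom: "homogeneous_mean M"
      and ex: "has_sym_asymp_exp M a"
  shows "aexp L (evfps a) (\<lambda>u. M (1 - u) (1 + u))"
proof -
  define \<phi> where "\<phi> u = M (1 - u) (1 + u)" for u
  define E where "E u = (\<phi> u - (\<Sum>n\<le>L. a n * u^(2*n))) / u^(2*L)" for u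
  have "(\<lambda>x. M (x - 1) (x + 1) - (\<Sum>n\<le>L. a n * 1 ^ (2 * n) * x powr (1 - 2 * real n)))
          \<in> o[at_top](\<lambda>x. x powr (1 - 2 * real L))"
    using ex unfolding has_sym_asymp_exp_def by blast
  then have lim: "((\<lambda>x. (M (x - 1) (x + 1) - (\<Sum>n\<le>L. a n * x powr (1 - 2 * real n))) / x powr (1 - 2 * real L)) \<longlongrightarrow> 0) at_top"
    by (intro smalloD_tendsto) simp
  have "eventually (\<lambda>x. (M (x - 1) (x + 1) - (\<Sum>n\<le>L. a n * x powr (1 - 2 * real n))) / x powr (1 - 2 * real L)
       = E (inverse x)) at_top"
    using eventually_gt_at_top[of 1]
  proof eventually_elim
    fix x :: real assume x: "x > 1"
    have "x * (1 - inverse x) = x - 1" "x * (1 + inverse x) = x + 1" using x by (simp_all add: field_simps)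
    then have "M (x - 1) (x + 1) = M (x * (1 - inverse x)) (x * (1 + inverse x))" by simp
    also have "\<dots> = x * \<phi> (inverse x)"
    proof -
      have "1 - inverse x > 0" "1 + inverse x > 0" using x by (auto simp: field_simps)
      then show ?thesis using hom[unfolded homogeneous_mean_def, rule_format, of x "1 - inverse x" "1 + inverse x"] x
        unfolding \<phi>_def by simp
    qed
    finally have Mx: "M (x - 1) (x + 1) = x * \<phi> (inverse x)" .
    have S: "(\<Sum>n\<le>L. a n * x powr (1 - 2 * real n)) = x * (\<Sum>n\<le>L. a n * inverse x ^ (2*n))"
      using x by (simp add: powr_odd' sum_distrib_left power_inverse field_simps)
    show "(M (x - 1) (x + 1) - (\<Sum>n\<le>L. a n * x powr (1 - 2 * real n))) / x powr (1 - 2 * real L) = E (inverse x)"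
      using x unfolding Mx S E_def by (simp add: powr_odd powr_odd' power_inverse field_simps)
  qed
  with lim have "((\<lambda>x. E (inverse x)) \<longlongrightarrow> 0) at_top" by (simp add: tendsto_cong)
  then have right: "(E \<longlongrightarrow> 0) (at_right 0)"
    unfolding filterlim_at_top_to_right by simp
  have Eeven: "E (- u) = E u" if "0 < u" "u < 1" for u
  proof -
    have "\<phi> (- u) = \<phi> u" using sym that unfolding \<phi>_def symmetric_mean_def by simp
    then show ?thesis by (simp add: E_def)
  qed
  have "eventually (\<lambda>u. E u = E (- u)) (at_right (0::real))"
  proof -
    have "eventually (\<lambda>u::real. u \<in> {0<..<1}) (at_right 0)" by (rule eventually_at_right_real) simp
    then show ?thesis by eventually_elim (auto simp: Eeven)
  qed
  with right have "((\<lambda>u. E (- u)) \<longlongrightarrow> 0) (at_right 0)" by (simp add: tendsto_cong)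
  then have left: "(E \<longlongrightarrow> 0) (at_left 0)"
    unfolding filterlim_at_left_to_right by simp
  have "(E \<longlongrightarrow> 0) (at 0)" using left right by (rule filterlim_split_at)
  then have "aexp (2*L) (evfps a) \<phi>"
    unfolding aexp_def E_def sum_evfps_even by (simp add: power_mult)
  then show ?thesis unfolding \<phi>_def by (rule aexp_le) simp
qed


lemma concl_from_aexp:
  assumes hom: "\<forall>l>0. \<forall>s>0. \<forall>t>0. R (l * s) (l * t) = l * R s t"
      and diag: "\<forall>x>0. R x x = x" and a0: "aR 0 = 1"
      and ex: "\<And>L. aexp L (evfps aR) (\<lambda>u. R (1 - u) (1 + u))"
  shows "has_sym_asymp_exp R aR"
  unfolding has_sym_asymp_exp_def
proof (intro allI)
  fix t :: real and K :: nat
  let ?f = "\<lambda>x. R (x - t) (x + t) - (\<Sum>n\<le>K. aR n * t ^ (2 * n) * x powr (1 - 2 * real n))"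
  let ?g = "\<lambda>x::real. x powr (1 - 2 * real K)"
  have gnz: "eventually (\<lambda>x. ?g x \<noteq> 0) at_top"
    using eventually_gt_at_top[of 0] by eventually_elim simp
  show "?f \<in> o[at_top](?g)"
  proof (cases "t = 0")
    case True
    have "eventually (\<lambda>x. ?f x / ?g x = 0) at_top"
      using eventually_gt_at_top[of 0]
    proof eventually_elim
      fix x :: real assume x: "x > 0"
      have "(\<Sum>n\<le>K. aR n * t ^ (2 * n) * x powr (1 - 2 * real n)) = x"
        using True x a0 by (subst sum.atMost_shift) auto
      then show "?f x / ?g x = 0" using True x diag by simp
    qed
    then have "((\<lambda>x. ?f x / ?g x) \<longlongrightarrow> 0) at_top" by (rule tendsto_eventually)
    then show ?thesis using gnz by (rule smalloI_tendsto)
  next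
    case False
    define \<psi> where "\<psi> u = R (1 - u) (1 + u)" for u
    define E where "E u = (\<psi> u - (\<Sum>n\<le>K. aR n * u^(2*n))) / u^(2*K)" for u
    have "aexp (2*K) (evfps aR) \<psi>" using ex unfolding \<psi>_def .
    then have E0: "(E \<longlongrightarrow> 0) (at 0)"
      unfolding aexp_def E_def sum_evfps_even by (simp add: power_mult)
    have tx: "filterlim (\<lambda>x. t / x) (at 0) at_top"
    proof (rule filterlim_atI)
      show "((\<lambda>x. t / x) \<longlongrightarrow> 0) at_top" by (rule tendsto_divide_0[OF tendsto_const filterlim_at_top_imp_at_infinity[OF filterlim_ident]])
      show "eventually (\<lambda>x. t / x \<noteq> 0) at_top"
        using eventually_gt_at_top[of 0] by eventually_elim (use False in simp)
    qed
    have "((\<lambda>x. E (t / x)) \<longlongrightarrow> 0) at_top" using E0 tx by (rule filterlim_compose)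
    then have lim: "((\<lambda>x. t ^ (2*K) * E (t / x)) \<longlongrightarrow> 0) at_top"
      using tendsto_mult_left[of "\<lambda>x. E (t / x)" 0 at_top "t ^ (2*K)"] by simp
    have "eventually (\<lambda>x. t ^ (2*K) * E (t / x) = ?f x / ?g x) at_top"
      using eventually_gt_at_top[of "\<bar>t\<bar>"]
    proof eventually_elim
      fix x :: real assume x: "x > \<bar>t\<bar>"
      then have x0: "x > 0" by simp
      have "1 - t / x > 0" "1 + t / x > 0" using x by (auto simp: field_simps abs_less_iff)
      then have "R (x * (1 - t / x)) (x * (1 + t / x)) = x * \<psi> (t / x)"
        using hom x0 unfolding \<psi>_def by simp
      moreover have "x * (1 - t / x) = x - t" "x * (1 + t / x) = x + t" using x0 by (simp_all add: field_simps)
      ultimately have Rx: "R (x - t) (x + t) = x * \<psi> (t / x)" by simp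
      have S: "(\<Sum>n\<le>K. aR n * t ^ (2 * n) * x powr (1 - 2 * real n)) = x * (\<Sum>n\<le>K. aR n * (t / x) ^ (2*n))"
        using x0 by (simp add: powr_odd' sum_distrib_left power_divide field_simps)
      show "t ^ (2*K) * E (t / x) = ?f x / ?g x"
        unfolding Rx S E_def using x0 False by (simp add: powr_odd powr_odd' power_divide field_simps)
    qed
    with lim have "((\<lambda>x. ?f x / ?g x) \<longlongrightarrow> 0) at_top" by (simp add: tendsto_cong)
    then show ?thesis using gnz by (rule smalloI_tendsto)
  qed
qed




lemma sseq0: "aN 0 = 1 \<Longrightarrow> sseq aM aN 0 = 1"
  by (simp add: sseq_def P.simps[of 0] gseq_def hseq_def)

lemma dseq0: "aN 0 = 1 \<Longrightarrow> dseq aM aN 0 = 1/2"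
  by (simp add: dseq_def P.simps[of 0] P.simps[of "Suc 0"] gseq_def hseq_def)

lemma fps_h: "aM 0 = 1 \<Longrightarrow> 1 - fps_X + evfps aM = Abs_fps (hseq aM)"
  by (rule fps_ext) (auto simp: evfps_def hseq_def)

lemma fps_g: "aM 0 = 1 \<Longrightarrow> evfps aM - 1 + fps_X = fps_X * Abs_fps (gseq aM)"
proof (rule fps_ext)
  fix n assume a: "aM 0 = 1"
  show "(evfps aM - 1 + fps_X) $ n = (fps_X * Abs_fps (gseq aM)) $ n"
  proof (cases "n = 0 \<or> n = 1")
    case True then show ?thesis using a by (auto simp: evfps_def gseq_def)
  next
    case False
    then have "n \<ge> 2" by simp
    then show ?thesis
      by (cases "even n") (auto simp: evfps_def gseq_def elim!: evenE oddE)
  qed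
qed


theorem theorem3p1:
  fixes M N K :: "real \<Rightarrow> real \<Rightarrow> real" and aM aN aK :: "nat \<Rightarrow> real"
  assumes "is_mean M" "symmetric_mean M" "homogeneous_mean M" "has_sym_asymp_exp M aM"
      and "is_mean N" "symmetric_mean N" "homogeneous_mean N" "has_sym_asymp_exp N aN"
      and "is_mean K" "symmetric_mean K" "homogeneous_mean K" "has_sym_asymp_exp K aK"
  shows "has_sym_asymp_exp (resultant K N M) (resultant_coeff aK aN aM)"
proof -
  note mM = assms(1) and sM = assms(2) and hM = assms(3) and eM = assms(4)
  note mN = assms(5) and sN = assms(6) and hN = assms(7) and eN = assms(8)
  note mK = assms(9) and sK = assms(10) and hK = assms(11) and eK = assms(12)
  have aM0: "aM 0 = 1" by (rule coeff0_is_1[OF mM eM])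
  have aN0: "aN 0 = 1" by (rule coeff0_is_1[OF mN eN])
  have aK0: "aK 0 = 1" by (rule coeff0_is_1[OF mK eK])
  define d where "d = dseq aM aN"
  define s where "s = sseq aM aN"
  have d0: "d 0 = 1/2" unfolding d_def by (rule dseq0[of aN aM, OF aN0])
  have s0: "s 0 = 1" unfolding s_def by (rule sseq0[of aN aM, OF aN0])
  have aR0: "resultant_coeff aK aN aM 0 = 1"
    using d0 s0 aK0 by (simp add: resultant_coeff_def P.simps[of 0] d_def[symmetric] s_def[symmetric])
  have homR: "\<forall>l>0. \<forall>x>0. \<forall>y>0. resultant K N M (l * x) (l * y) = l * resultant K N M x y"
  proof (intro allI impI)
    fix l x y :: real assume l: "l > 0" and x: "x > 0" and y: "y > 0"
    have m: "M x y > 0" using mean_pos[OF mM x y] .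
    have e1: "M (l * x) (l * y) = l * M x y" using hM l x y unfolding homogeneous_mean_def by blast
    have e2: "N (l * x) (l * M x y) = l * N x (M x y)" using hN l x m unfolding homogeneous_mean_def by blast
    have e3: "N (l * M x y) (l * y) = l * N (M x y) y" using hN l y m unfolding homogeneous_mean_def by blast
    have p1: "N x (M x y) > 0" "N (M x y) y > 0" using mean_pos[OF mN] x y m by auto
    have e4: "K (l * N x (M x y)) (l * N (M x y) y) = l * K (N x (M x y)) (N (M x y) y)"
      using hK l p1 unfolding homogeneous_mean_def by blast
    show "resultant K N M (l * x) (l * y) = l * resultant K N M x y"
      unfolding resultant_def e1 e2 e3 e4 ..
  qed
  have diagR: "\<forall>x>0. resultant K N M x x = x"
    by (auto simp: resultant_def mean_diag[OF mM] mean_diag[OF mN] mean_diag[OF mK])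
  show ?thesis
  proof (rule concl_from_aexp[of "resultant K N M" "resultant_coeff aK aN aM", OF homR diagR aR0])
    fix L :: nat
    define m where "m u = M (1 - u) (1 + u)" for u
    define c where "c u = 1/2 * (1 - u + m u)" for u
    define \<delta> where "\<delta> u = 1/2 * (m u - 1 + u)" for u
    define v where "v u = \<delta> u * inverse (c u)" for u
    define p where "p u = c u * N (1 - v u) (1 + v u)" for u
    define q where "q u = p (- u)" for u
    define C where "C u = 1/2 * (p u + q u)" for u
    define \<Delta> where "\<Delta> u = 1/2 * (q u - p u)" for u
    define w where "w u = \<Delta> u * inverse (C u)" for u
    define \<psi> where "\<psi> u = C u * K (1 - w u) (1 + w u)" for u
    have key_p: "N (1 - u) (m u) = p u" if "\<bar>u\<bar> < 1" for u
    proof -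
      have a: "1 - u > 0" "1 + u > 0" using that by auto
      have mpos: "m u > 0" unfolding m_def using mean_pos[OF mM a] .
      have "N (1 - u) (m u) = ((1 - u) + m u) / 2 * N (1 - ((m u - (1 - u)) / 2) * inverse (((1 - u) + m u) / 2))
          (1 + ((m u - (1 - u)) / 2) * inverse (((1 - u) + m u) / 2))"
        by (rule hom_center[OF hN a(1) mpos])
      also have "\<dots> = p u" unfolding p_def v_def c_def \<delta>_def by (simp add: field_simps)
      finally show ?thesis .
    qed
    have key_m: "m (- u) = m u" if "\<bar>u\<bar> < 1" for u
      using sM that unfolding m_def symmetric_mean_def by auto
    have key_q: "N (m u) (1 + u) = q u" if "\<bar>u\<bar> < 1" for u
    proof -
      have a: "1 + u > 0" using that by auto
      have mpos: "m u > 0" unfolding m_def using mean_pos[OF mM] that by auto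
      have "q u = N (1 - (- u)) (m (- u))" unfolding q_def using key_p[of "- u"] that by simp
      also have "\<dots> = N (1 + u) (m u)" using key_m[OF that] by simp
      also have "\<dots> = N (m u) (1 + u)" using sN a mpos unfolding symmetric_mean_def by auto
      finally show ?thesis ..
    qed
    have key: "resultant K N M (1 - u) (1 + u) = \<psi> u" if "\<bar>u\<bar> < 1" for u
    proof -
      have a: "1 - u > 0" "1 + u > 0" using that by auto
      have mpos: "m u > 0" unfolding m_def using mean_pos[OF mM a] .
      have pp: "p u > 0" using key_p[OF that] mean_pos[OF mN a(1) mpos] by simp
      have qp: "q u > 0" using key_q[OF that] mean_pos[OF mN mpos a(2)] by simp
      have "resultant K N M (1 - u) (1 + u) = K (p u) (q u)"
        unfolding resultant_def m_def[symmetric] key_p[OF that] key_q[OF that] ..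
      also have "\<dots> = (p u + q u) / 2 * K (1 - ((q u - p u) / 2) * inverse ((p u + q u) / 2))
          (1 + ((q u - p u) / 2) * inverse ((p u + q u) / 2))"
        by (rule hom_center[OF hK pp qp])
      also have "\<dots> = \<psi> u" unfolding \<psi>_def w_def C_def \<Delta>_def by (simp add: field_simps)
      finally show ?thesis .
    qed
    have ev_key: "eventually (\<lambda>u. \<psi> u = resultant K N M (1 - u) (1 + u)) (at 0)"
      unfolding eventually_at using key by (intro exI[of _ 1]) (auto simp: dist_real_def)
    define C1 where "C1 = fps_const (1/2) * Abs_fps (hseq aM)"
    define D1 where "D1 = fps_const (1/2) * fps_X * Abs_fps (gseq aM)"
    define Fp where "Fp = C1 * (\<Sum>k\<le>L. fps_const (evfps aN $ k) * (D1 * inverse C1)^k)"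
    define Fq where "Fq = Abs_fps (\<lambda>k. (-1)^k * Fp $ k)"
    define Cf where "Cf = Abs_fps s oo fps_X^2"
    define Df where "Df = fps_X * (Abs_fps d oo fps_X^2)"
    have Fp_nth: "Fp $ j = (if even j then s (j div 2) else - d (j div 2))" if "j \<le> L" for j
      unfolding Fp_def C1_def D1_def s_def d_def by (rule stage1[OF that])
    have am: "aexp L (evfps aM) m" unfolding m_def by (rule hyp_aexp[OF mM sM hM eM])
    have hc: "aexp L C1 c"
    proof -
      have "aexp L (fps_const (1/2) * (1 - fps_X + evfps aM)) (\<lambda>u. 1/2 * (1 - u + m u))"
        by (intro aexp_cmult aexp_add aexp_diff aexp_X am aexp_const[of L 1, simplified])
      then show ?thesis unfolding C1_def fps_h[of aM, OF aM0, symmetric] by (rule aexp_cong) (auto simp: c_def)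
    qed
    have hd: "aexp L D1 \<delta>"
    proof -
      have "aexp L (fps_const (1/2) * (evfps aM - 1 + fps_X)) (\<lambda>u. 1/2 * (m u - 1 + u))"
        by (intro aexp_cmult aexp_add aexp_diff aexp_X am aexp_const[of L 1, simplified])
      then show ?thesis unfolding D1_def mult.assoc fps_g[of aM, OF aM0, symmetric] by (rule aexp_cong) (auto simp: \<delta>_def mult.assoc)
    qed
    have C10: "C1 $ 0 \<noteq> 0" by (simp add: C1_def hseq_def)
    have hv: "aexp L (D1 * inverse C1) v"
      using aexp_mult[OF hd aexp_inverse[OF hc C10]] unfolding v_def .
    have hp: "aexp L Fp p"
    proof -
      have "aexp L (\<Sum>k\<le>L. fps_const (evfps aN $ k) * (D1 * inverse C1)^k) (\<lambda>u. N (1 - v u) (1 + v u))"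
        by (rule aexp_compose[OF hyp_aexp[OF mN sN hN eN] _ hv])
           (auto simp: mean_diag[OF mN] evfps_def aN0 D1_def)
      from aexp_mult[OF hc this] show ?thesis unfolding Fp_def p_def .
    qed
    have hq: "aexp L Fq q" unfolding Fq_def q_def by (rule aexp_reflect[OF hp])
    have hC: "aexp L Cf C"
    proof -
      have "aexp L (fps_const (1/2) * (Fp + Fq)) (\<lambda>u. 1/2 * (p u + q u))"
        by (intro aexp_cmult aexp_add hp hq)
      then show ?thesis
      proof (rule aexp_cong)
        show "eventually (\<lambda>u. 1/2 * (p u + q u) = C u) (at 0)" by (simp add: C_def)
        fix j assume j: "j \<le> L"
        show "(fps_const (1/2) * (Fp + Fq)) $ j = Cf $ j"
          using Fp_nth[OF j] by (auto simp: Fq_def Cf_def evF_nth)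
      qed
    qed
    have hD: "aexp L Df \<Delta>"
    proof -
      have "aexp L (fps_const (1/2) * (Fq - Fp)) (\<lambda>u. 1/2 * (q u - p u))"
        by (intro aexp_cmult aexp_diff hp hq)
      then show ?thesis
      proof (rule aexp_cong)
        show "eventually (\<lambda>u. 1/2 * (q u - p u) = \<Delta> u) (at 0)" by (simp add: \<Delta>_def)
        fix j assume j: "j \<le> L"
        show "(fps_const (1/2) * (Fq - Fp)) $ j = Df $ j"
        proof (cases "even j")
          case True then show ?thesis using Fp_nth[OF j] by (auto simp: Fq_def Df_def evF_nth)
        next
          case False
          then have "j \<noteq> 0" "even (j - 1)" "(j - 1) div 2 = j div 2" by presburger+
          then show ?thesis using Fp_nth[OF j] False by (auto simp: Fq_def Df_def evF_nth)
        qed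
      qed
    qed
    have Cf0: "Cf $ 0 \<noteq> 0" using s0 by (simp add: Cf_def evF_nth)
    have hw: "aexp L (Df * inverse Cf) w"
      using aexp_mult[OF hD aexp_inverse[OF hC Cf0]] unfolding w_def .
    have hpsi: "aexp L (Cf * (\<Sum>k\<le>L. fps_const (evfps aK $ k) * (Df * inverse Cf)^k)) \<psi>"
    proof -
      have "aexp L (\<Sum>k\<le>L. fps_const (evfps aK $ k) * (Df * inverse Cf)^k) (\<lambda>u. K (1 - w u) (1 + w u))"
        by (rule aexp_compose[OF hyp_aexp[OF mK sK hK eK] _ hw])
           (auto simp: mean_diag[OF mK] evfps_def aK0 Df_def)
      from aexp_mult[OF hC this] show ?thesis unfolding \<psi>_def .
    qed
    show "aexp L (evfps (resultant_coeff aK aN aM)) (\<lambda>u. resultant K N M (1 - u) (1 + u))"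
      using hpsi
    proof (rule aexp_cong)
      show "eventually (\<lambda>u. \<psi> u = resultant K N M (1 - u) (1 + u)) (at 0)" by (rule ev_key)
      fix j assume j: "j \<le> L"
      have "d 0 > 0" "s 0 > 0" using d0 s0 by auto
      from stage2[of d s, OF this j, of aK]
      show "(Cf * (\<Sum>k\<le>L. fps_const (evfps aK $ k) * (Df * inverse Cf)^k)) $ j = evfps (resultant_coeff aK aN aM) $ j"
        unfolding Cf_def Df_def by (simp add: evfps_def resultant_coeff_def d_def s_def)
    qed
  qed
qed



end
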